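(* Let $Y$ be a real Banach space and $X$ a closed linear subspace of $Y$, and let $q\colon Y^*\to X^*$ be the restriction map $q(y^* )=y^*|_X$. Put $\mathcal{HB}(S_{X^*}):=\{y^*\in Y^*:\ \|y^*\|=1,\ \|q(y^* )\|=1\}$. Then $X$ has property U in $Y$ if and only if the restriction $q|_{\mathcal{HB}(S_{X^*})}\colon \mathcal{HB}(S_{X^*})\to S_{X^*}$ (which is always onto) is one-to-one. Moreover, if this is the case, then $q|_{\mathcal{HB}(S_{X^*})}$ is a homeomorphism from $\mathcal{HB}(S_{X^*})$ onto $S_{X^*}$, both endowed with the relative weak$^*$ topologies.
   Context: A closed subspace $X$ of a Banach space $Y$ has property U in $Y$ if every $x^*\in X^*$ has a unique Hahn–Banach (norm-preserving) extension to $Y$, i.e. for every $x^*\in X^*$ there is exactly one $y^*\in Y^*$ with $y^*|_X=x^*$ and $\|y^*\|=\|x^*\|$. $S_Z$ denotes the unit sphere of a Banach space $Z$. *)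

theory Defs
  imports "HOL-Analysis.Analysis"
begin

text \<open>Dual of a subspace X (a set): functionals that are
  linear and bounded on X, represented extensionally (value 0 outside X).
  The weak-star topology is the topology of pointwise convergence, i.e. the
  product topology on the function type 'a => real (instance from Function_Topology),
  restricted to the relevant subsets.\<close>

definition dual_space :: "('a::real_normed_vector \<Rightarrow> real) set" where
  "dual_space = {f. bounded_linear f}"

definition sub_dual :: "'a::real_normed_vector set \<Rightarrow> ('a \<Rightarrow> real) set" where
  "sub_dual X = {f. (\<forall>x\<in>X. \<forall>y\<in>X. f (x + y) = f x + f y)
                  \<and> (\<forall>c. \<forall>x\<in>X. f (c *\<^sub>R x) = c * f x)
                  \<and> (\<exists>K. \<forall>x\<in>X. \<bar>f x\<bar> \<le> K * norm x)
                  \<and> (\<forall>x. x \<notin> X \<longrightarrow> f x = 0)}"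

definition sub_dual_norm :: "'a::real_normed_vector set \<Rightarrow> ('a \<Rightarrow> real) \<Rightarrow> real" where
  "sub_dual_norm X f = Sup {\<bar>f x\<bar> | x. x \<in> X \<and> norm x \<le> 1}"

definition restr :: "'a set \<Rightarrow> ('a \<Rightarrow> real) \<Rightarrow> ('a \<Rightarrow> real)" where
  "restr X f = (\<lambda>x. if x \<in> X then f x else 0)"

definition property_U :: "'a::real_normed_vector set \<Rightarrow> bool" where
  "property_U X \<longleftrightarrow> (\<forall>g \<in> sub_dual X. \<exists>!f. f \<in> dual_space \<and> restr X f = g
                          \<and> onorm f = sub_dual_norm X g)"

definition HB_set :: "'a::real_normed_vector set \<Rightarrow> ('a \<Rightarrow> real) set" where
  "HB_set X = {f \<in> dual_space. onorm f = 1 \<and> sub_dual_norm X (restr X f) = 1}"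

definition sub_dual_sphere :: "'a::real_normed_vector set \<Rightarrow> ('a \<Rightarrow> real) set" where
  "sub_dual_sphere X = {g \<in> sub_dual X. sub_dual_norm X g = 1}"

end

theory Submission
  imports Defs
begin


definition sublin :: "('a::real_vector \<Rightarrow> real) \<Rightarrow> bool" where
  "sublin p \<longleftrightarrow> (\<forall>x y. p (x + y) \<le> p x + p y) \<and> (\<forall>c x. c \<ge> 0 \<longrightarrow> p (c *\<^sub>R x) = c * p x)"

lemma sublin_0: "sublin q \<Longrightarrow> q 0 = 0"
  unfolding sublin_def by (metis mult_zero_left order_refl scaleR_zero_left)

lemma sublin_neg: "sublin q \<Longrightarrow> - q (- x) \<le> q x"
proof -
  assume q: "sublin q"
  have "q (x + - x) \<le> q x + q (- x)" using q unfolding sublin_def by blast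
  then show ?thesis using sublin_0[OF q] by simp
qed

lemma inf_chain_sublin:
  fixes C :: "('a::real_vector \<Rightarrow> real) set"
  assumes ne: "C \<noteq> {}" and sub: "\<forall>q\<in>C. sublin q"
    and ch: "\<forall>a\<in>C. \<forall>b\<in>C. (\<forall>x. a x \<le> b x) \<or> (\<forall>x. b x \<le> a x)"
    and le: "\<forall>q\<in>C. \<forall>x. q x \<le> p x"
  shows "sublin (\<lambda>x. INF q\<in>C. q x)"
proof -
  have bdd: "bdd_below ((\<lambda>q. q x) ` C)" for x
  proof (rule bdd_belowI2[where m="- p (- x)"])
    fix q assume "q \<in> C"
    then have "q (- x) \<le> p (- x)" "- q (- x) \<le> q x" using sublin_neg[of q x] sub le by auto
    then show "- p (- x) \<le> q x" by linarith
  qed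
  have add: "(INF q\<in>C. q (x + y)) \<le> (INF q\<in>C. q x) + (INF q\<in>C. q y)" for x y
  proof -
    have "(INF q\<in>C. q (x + y)) - q2 y \<le> q1 x" if q12: "q1 \<in> C" "q2 \<in> C" for q1 q2
    proof -
      obtain q where q: "q \<in> C" "q x \<le> q1 x" "q y \<le> q2 y"
        using ch q12 by blast
      have "(INF q\<in>C. q (x + y)) \<le> q (x + y)" using q(1) bdd by (rule cINF_lower[rotated])
      also have "\<dots> \<le> q x + q y" using sub q(1) unfolding sublin_def by blast
      finally show ?thesis using q by linarith
    qed
    then have "(INF q\<in>C. q (x + y)) - q2 y \<le> (INF q\<in>C. q x)" if "q2 \<in> C" for q2
      using that ne by (intro cINF_greatest) auto
    then have "(INF q\<in>C. q (x + y)) - (INF q\<in>C. q x) \<le> q2 y" if "q2 \<in> C" for q2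
      using that by force
    then have "(INF q\<in>C. q (x + y)) - (INF q\<in>C. q x) \<le> (INF q\<in>C. q y)"
      using ne by (intro cINF_greatest) auto
    then show ?thesis by linarith
  qed
  have hom: "(INF q\<in>C. q (c *\<^sub>R x)) = c * (INF q\<in>C. q x)" if c: "c \<ge> 0" for c x
  proof (cases "c = 0")
    case True
    have "(INF q\<in>C. q (c *\<^sub>R x)) = (INF q\<in>C. (0::real))"
      using True sub sublin_0 by (intro INF_cong) auto
    then show ?thesis using True ne by simp
  next
    case False
    then have cp: "c > 0" using c by simp
    have e: "q (c *\<^sub>R x) = c * q x" if "q \<in> C" for q
      using that sub c unfolding sublin_def by blast
    have 1: "c * (INF q\<in>C. q x) \<le> (INF q\<in>C. q (c *\<^sub>R x))"
    proof (rule cINF_greatest[OF ne])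
      fix q assume q: "q \<in> C"
      have "(INF q\<in>C. q x) \<le> q x" using q bdd by (rule cINF_lower[rotated])
      then show "c * (INF q\<in>C. q x) \<le> q (c *\<^sub>R x)" using e[OF q] cp by simp
    qed
    have "(INF q\<in>C. q (c *\<^sub>R x)) / c \<le> q x" if "q \<in> C" for q
    proof -
      have "(INF q\<in>C. q (c *\<^sub>R x)) \<le> q (c *\<^sub>R x)" using that bdd by (rule cINF_lower[rotated])
      then show ?thesis using e[OF that] cp by (simp add: divide_le_eq mult.commute)
    qed
    then have "(INF q\<in>C. q (c *\<^sub>R x)) / c \<le> (INF q\<in>C. q x)"
      using ne by (intro cINF_greatest) auto
    then have "(INF q\<in>C. q (c *\<^sub>R x)) \<le> c * (INF q\<in>C. q x)"
      using cp by (simp add: divide_le_eq mult.commute)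
    then show ?thesis using 1 by linarith
  qed
  show ?thesis unfolding sublin_def using add hom by blast
qed

lemma min_sublin_odd:
  fixes q :: "'a::real_vector \<Rightarrow> real"
  assumes q: "sublin q" and mn: "\<And>r. sublin r \<Longrightarrow> (\<forall>x. r x \<le> q x) \<Longrightarrow> r = q"
  shows "q (- z) = - q z"
proof -
  define r where "r x = (INF t\<in>{0..}. q (x + t *\<^sub>R z) - t * q z)" for x
  have qa: "q (x + y) \<le> q x + q y" for x y using q unfolding sublin_def by blast
  have qh: "c \<ge> 0 \<Longrightarrow> q (c *\<^sub>R x) = c * q x" for c x using q unfolding sublin_def by blast
  have ne: "{0::real..} \<noteq> {}" by auto
  have lb: "- q (- x) \<le> q (x + t *\<^sub>R z) - t * q z" if "t \<ge> 0" for x t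
  proof -
    have "q (t *\<^sub>R z) \<le> q (x + t *\<^sub>R z) + q (- x)" using qa[of "x + t *\<^sub>R z" "- x"] by simp
    then show ?thesis using qh[OF that, of z] by linarith
  qed
  have bdd: "bdd_below ((\<lambda>t. q (x + t *\<^sub>R z) - t * q z) ` {0..})" for x
    using lb by (intro bdd_belowI2[where m="- q (- x)"]) auto
  have rl: "r x \<le> q (x + t *\<^sub>R z) - t * q z" if "t \<ge> 0" for x t
    unfolding r_def using bdd that by (intro cINF_lower) auto
  have rg: "m \<le> r x" if "\<And>t. t \<ge> 0 \<Longrightarrow> m \<le> q (x + t *\<^sub>R z) - t * q z" for m x
    unfolding r_def using that by (intro cINF_greatest[OF ne]) auto
  have rq: "r x \<le> q x" for x using rl[of 0 x] by simp
  have radd: "r (x + y) \<le> r x + r y" for x y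
  proof -
    have "r (x + y) - (q (y + t *\<^sub>R z) - t * q z) \<le> q (x + s *\<^sub>R z) - s * q z"
      if "s \<ge> 0" "t \<ge> 0" for s t
    proof -
      have "r (x + y) \<le> q ((x + y) + (s + t) *\<^sub>R z) - (s + t) * q z" using that by (intro rl) auto
      also have "(x + y) + (s + t) *\<^sub>R z = (x + s *\<^sub>R z) + (y + t *\<^sub>R z)" by (simp add: algebra_simps)
      finally show ?thesis using qa[of "x + s *\<^sub>R z" "y + t *\<^sub>R z"] by (simp add: algebra_simps)
    qed
    then have "r (x + y) - (q (y + t *\<^sub>R z) - t * q z) \<le> r x" if "t \<ge> 0" for t
      using that by (intro rg) auto
    then have "r (x + y) - r x \<le> q (y + t *\<^sub>R z) - t * q z" if "t \<ge> 0" for t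
      using that by force
    then have "r (x + y) - r x \<le> r y" by (intro rg) auto
    then show ?thesis by linarith
  qed
  have rh: "r (c *\<^sub>R x) = c * r x" if c: "c \<ge> 0" for c x
  proof (cases "c = 0")
    case True
    have "r 0 \<le> 0" using rl[of 0 0] sublin_0[OF q] by simp
    moreover have "0 \<le> r 0" by (intro rg) (simp add: qh)
    ultimately show ?thesis using True by simp
  next
    case False
    then have cp: "c > 0" using c by simp
    have 1: "c * r x \<le> r (c *\<^sub>R x)"
    proof (rule rg)
      fix t :: real assume t: "t \<ge> 0"
      have "r x \<le> q (x + (t / c) *\<^sub>R z) - (t / c) * q z" using t cp by (intro rl) auto
      then have "c * r x \<le> c * (q (x + (t / c) *\<^sub>R z) - (t / c) * q z)" using cp by simp
      also have "\<dots> = q (c *\<^sub>R (x + (t / c) *\<^sub>R z)) - t * q z"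
        using qh[of c "x + (t / c) *\<^sub>R z"] cp by (simp add: algebra_simps)
      also have "c *\<^sub>R (x + (t / c) *\<^sub>R z) = c *\<^sub>R x + t *\<^sub>R z"
        using cp by (simp add: algebra_simps)
      finally show "c * r x \<le> q (c *\<^sub>R x + t *\<^sub>R z) - t * q z" .
    qed
    have "r (c *\<^sub>R x) / c \<le> r x"
    proof (rule rg)
      fix t :: real assume t: "t \<ge> 0"
      have "r (c *\<^sub>R x) \<le> q (c *\<^sub>R x + (c * t) *\<^sub>R z) - (c * t) * q z" using t cp by (intro rl) auto
      also have "c *\<^sub>R x + (c * t) *\<^sub>R z = c *\<^sub>R (x + t *\<^sub>R z)" by (simp add: algebra_simps)
      also have "q \<dots> = c * q (x + t *\<^sub>R z)" using qh cp by simp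
      finally have "r (c *\<^sub>R x) \<le> (q (x + t *\<^sub>R z) - t * q z) * c"
        by (simp add: algebra_simps)
      then show "r (c *\<^sub>R x) / c \<le> q (x + t *\<^sub>R z) - t * q z"
        using cp by (simp add: pos_divide_le_eq)
    qed
    then have "r (c *\<^sub>R x) \<le> c * r x" using cp by (simp add: divide_le_eq mult.commute)
    then show ?thesis using 1 by linarith
  qed
  have "sublin r" unfolding sublin_def using radd rh by blast
  then have "r = q" using mn rq by blast
  then have "q (- z) \<le> q (- z + 1 *\<^sub>R z) - 1 * q z" using rl[of 1 "- z"] by simp
  then have "q (- z) \<le> - q z" using sublin_0[OF q] by simp
  moreover have "- q (- z) \<le> q z" using sublin_neg[OF q] .
  ultimately show ?thesis by linarith
qed

lemma sublin_odd_linear: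
  assumes q: "sublin q" and odd: "\<And>z. q (- z) = - q z"
  shows "linear q"
proof (rule linearI)
  have qa: "q (x + y) \<le> q x + q y" for x y using q unfolding sublin_def by blast
  have qh: "c \<ge> 0 \<Longrightarrow> q (c *\<^sub>R x) = c * q x" for c x using q unfolding sublin_def by blast
  fix x y
  have "q (- x + - y) \<le> q (- x) + q (- y)" by (rule qa)
  then have "- q (x + y) \<le> - q x - q y" using odd[of "x + y"] odd[of x] odd[of y]
    by (simp add: add.commute)
  then show "q (x + y) = q x + q y" using qa[of x y] by linarith
next
  have qh: "c \<ge> 0 \<Longrightarrow> q (c *\<^sub>R x) = c * q x" for c x using q unfolding sublin_def by blast
  fix c :: real and x
  show "q (c *\<^sub>R x) = c *\<^sub>R q x"
  proof (cases "c \<ge> 0")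
    case True then show ?thesis using qh by simp
  next
    case False
    then have "q (c *\<^sub>R x) = q (- ((- c) *\<^sub>R x))" by simp
    also have "\<dots> = - ((- c) * q x)" using odd qh[of "- c" x] False by simp
    finally show ?thesis by simp
  qed
qed

lemma sublin_linear_below:
  fixes p :: "'a::real_vector \<Rightarrow> real"
  assumes p: "sublin p"
  shows "\<exists>f. linear f \<and> (\<forall>x. f x \<le> p x)"
proof -
  define S where "S = {q. sublin q \<and> (\<forall>x. q x \<le> p x)}"
  define R where "R = {(a, b). a \<in> S \<and> b \<in> S \<and> (\<forall>x. b x \<le> a x)}"
  have pS: "p \<in> S" using p unfolding S_def by auto
  have F: "Field R = S" unfolding R_def Field_def by auto
  have po: "Partial_order R"
    unfolding partial_order_on_def preorder_on_def refl_on_def trans_def antisym_def F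
    by (auto simp: R_def fun_eq_iff intro: order_trans order_antisym)
  have "\<exists>u\<in>Field R. \<forall>a\<in>C. (a, u) \<in> R" if C: "C \<in> Chains R" for C
  proof (cases "C = {}")
    case True then show ?thesis using pS F by auto
  next
    case False
    have CS: "C \<subseteq> S" using C unfolding Chains_def R_def by auto
    have ch: "\<forall>a\<in>C. \<forall>b\<in>C. (\<forall>x. a x \<le> b x) \<or> (\<forall>x. b x \<le> a x)"
      using C unfolding Chains_def R_def by blast
    define u where "u = (\<lambda>x. INF q\<in>C. q x)"
    have su: "sublin u" unfolding u_def
      using CS ch False by (intro inf_chain_sublin[where p=p]) (auto simp: S_def)
    have bdd: "bdd_below ((\<lambda>q. q x) ` C)" for x
    proof (rule bdd_belowI2[where m="- p (- x)"])
      fix q assume "q \<in> C"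
      then have "q (- x) \<le> p (- x)" "- q (- x) \<le> q x" using sublin_neg[of q x] CS by (auto simp: S_def)
      then show "- p (- x) \<le> q x" by linarith
    qed
    have ul: "u x \<le> q x" if "q \<in> C" for q x
      unfolding u_def using that bdd by (rule cINF_lower[rotated])
    obtain q0 where q0: "q0 \<in> C" using False by auto
    have "u x \<le> p x" for x
    proof -
      have "q0 x \<le> p x" using q0 CS by (auto simp: S_def)
      then show ?thesis using ul[OF q0, of x] by linarith
    qed
    then have "u \<in> S" using su by (auto simp: S_def)
    then show ?thesis using ul CS F by (auto simp: R_def)
  qed
  then obtain m where m: "m \<in> Field R" and mx: "\<forall>a\<in>Field R. (m, a) \<in> R \<longrightarrow> a = m"
    using Zorns_po_lemma[OF po] by blast
  have mS: "sublin m" "\<forall>x. m x \<le> p x" using m F by (auto simp: S_def)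
  have "m (- z) = - m z" for z
  proof (rule min_sublin_odd[OF mS(1)])
    fix r assume r: "sublin r" "\<forall>x. r x \<le> m x"
    then have "r \<in> S" using mS by (force simp: S_def intro: order_trans)
    then show "r = m" using mx r m F by (auto simp: R_def)
  qed
  then show ?thesis using sublin_odd_linear[OF mS(1)] mS(2) by blast
qed

lemma sub_dual_basic:
  assumes X: "subspace X" and g: "g \<in> sub_dual X"
  shows "g 0 = 0" "\<And>x y. x \<in> X \<Longrightarrow> y \<in> X \<Longrightarrow> g (x + y) = g x + g y"
    "\<And>c x. x \<in> X \<Longrightarrow> g (c *\<^sub>R x) = c * g x" "\<And>x. x \<notin> X \<Longrightarrow> g x = 0"
    "\<exists>K. \<forall>x\<in>X. \<bar>g x\<bar> \<le> K * norm x"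
proof -
  show "\<And>x y. x \<in> X \<Longrightarrow> y \<in> X \<Longrightarrow> g (x + y) = g x + g y"
    "\<And>c x. x \<in> X \<Longrightarrow> g (c *\<^sub>R x) = c * g x" "\<And>x. x \<notin> X \<Longrightarrow> g x = 0"
    "\<exists>K. \<forall>x\<in>X. \<bar>g x\<bar> \<le> K * norm x"
    using g unfolding sub_dual_def by auto
  have "0 \<in> X" using X by (rule subspace_0)
  then have "g (0 + 0) = g 0 + g 0" using g unfolding sub_dual_def by blast
  then show "g 0 = 0" by simp
qed

lemma sdn_props:
  assumes X: "subspace X" and g: "g \<in> sub_dual X"
  shows "0 \<le> sub_dual_norm X g" "\<And>x. x \<in> X \<Longrightarrow> \<bar>g x\<bar> \<le> sub_dual_norm X g * norm x"
    "\<And>M. M \<ge> 0 \<Longrightarrow> (\<forall>x\<in>X. \<bar>g x\<bar> \<le> M * norm x) \<Longrightarrow> sub_dual_norm X g \<le> M"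
proof -
  note gb = sub_dual_basic[OF X g]
  define A where "A = {\<bar>g x\<bar> | x. x \<in> X \<and> norm x \<le> 1}"
  have sA: "sub_dual_norm X g = Sup A" unfolding A_def sub_dual_norm_def by simp
  have 0: "0 \<in> X" using X by (rule subspace_0)
  have zA: "0 \<in> A" unfolding A_def using 0 gb(1) by force
  obtain K where K: "\<forall>x\<in>X. \<bar>g x\<bar> \<le> K * norm x" using gb(5) by blast
  have "a \<le> \<bar>K\<bar>" if "a \<in> A" for a
  proof -
    obtain x where x: "a = \<bar>g x\<bar>" "x \<in> X" "norm x \<le> 1" using \<open>a \<in> A\<close> unfolding A_def by blast
    have "K * norm x \<le> \<bar>K\<bar> * norm x" by (simp add: mult_right_mono)
    also have "\<dots> \<le> \<bar>K\<bar>" using x(3) by (simp add: mult_left_le)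
    finally show ?thesis using K x by force
  qed
  then have bdd: "bdd_above A" by (rule bdd_aboveI)
  show s0: "0 \<le> sub_dual_norm X g" unfolding sA using zA bdd by (rule cSup_upper)
  show "\<bar>g x\<bar> \<le> sub_dual_norm X g * norm x" if x: "x \<in> X" for x
  proof (cases "x = 0")
    case True then show ?thesis using gb(1) by simp
  next
    case False
    define y where "y = (1 / norm x) *\<^sub>R x"
    have "y \<in> X" unfolding y_def using X x by (rule subspace_scale)
    moreover have "norm y \<le> 1" unfolding y_def using False by simp
    ultimately have "\<bar>g y\<bar> \<in> A" unfolding A_def by blast
    then have "\<bar>g y\<bar> \<le> sub_dual_norm X g" unfolding sA using bdd by (rule cSup_upper)
    moreover have "\<bar>g y\<bar> = \<bar>g x\<bar> / norm x" unfolding y_def using gb(3)[OF x] by (simp add: abs_mult)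
    ultimately show ?thesis using False by (simp add: divide_le_eq)
  qed
  show "sub_dual_norm X g \<le> M" if M: "M \<ge> 0" "\<forall>x\<in>X. \<bar>g x\<bar> \<le> M * norm x" for M
    unfolding sA
  proof (rule cSup_least)
    show "A \<noteq> {}" using zA by blast
    fix a assume "a \<in> A"
    then obtain x where x: "a = \<bar>g x\<bar>" "x \<in> X" "norm x \<le> 1" unfolding A_def by blast
    have "M * norm x \<le> M" using M x(3) by (simp add: mult_left_le)
    then show "a \<le> M" using M x by force
  qed
qed

lemma HB_extension:
  fixes X :: "'a::real_normed_vector set"
  assumes X: "subspace X" and g: "g \<in> sub_dual X" and N: "N \<ge> 0"
    and gN: "\<forall>x\<in>X. \<bar>g x\<bar> \<le> N * norm x"
  shows "\<exists>f. bounded_linear f \<and> (\<forall>x\<in>X. f x = g x) \<and> (\<forall>y. \<bar>f y\<bar> \<le> N * norm y)"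
proof -
  note gb = sub_dual_basic[OF X g]
  have 0: "0 \<in> X" using X by (rule subspace_0)
  define p where "p y = (INF x\<in>X. N * norm (y - x) + g x)" for y
  have ne: "X \<noteq> {}" using 0 by blast
  have lb: "- N * norm y \<le> N * norm (y - x) + g x" if "x \<in> X" for x y
  proof -
    have "norm x - norm y \<le> norm (y - x)" by (metis norm_minus_commute norm_triangle_ineq2)
    then have "N * (norm x - norm y) \<le> N * norm (y - x)" using N by (rule mult_left_mono)
    moreover have "- (N * norm x) \<le> g x" using gN that by force
    ultimately show ?thesis by (simp add: algebra_simps)
  qed
  have bdd: "bdd_below ((\<lambda>x. N * norm (y - x) + g x) ` X)" for y
    using lb by (intro bdd_belowI2[where m="- N * norm y"]) auto
  have pl: "p y \<le> N * norm (y - x) + g x" if "x \<in> X" for x y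
    unfolding p_def using bdd that by (intro cINF_lower) auto
  have pg: "m \<le> p y" if "\<And>x. x \<in> X \<Longrightarrow> m \<le> N * norm (y - x) + g x" for m y
    unfolding p_def using that by (intro cINF_greatest[OF ne]) auto
  have padd: "p (y1 + y2) \<le> p y1 + p y2" for y1 y2
  proof -
    have "p (y1 + y2) - (N * norm (y2 - x2) + g x2) \<le> N * norm (y1 - x1) + g x1"
      if "x1 \<in> X" "x2 \<in> X" for x1 x2
    proof -
      have "p (y1 + y2) \<le> N * norm ((y1 + y2) - (x1 + x2)) + g (x1 + x2)"
        using that X by (intro pl subspace_add) auto
      also have "norm ((y1 + y2) - (x1 + x2)) \<le> norm (y1 - x1) + norm (y2 - x2)"
        by (metis add_diff_add norm_triangle_ineq)
      then have "N * norm ((y1 + y2) - (x1 + x2)) \<le> N * norm (y1 - x1) + N * norm (y2 - x2)"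
        using N by (metis distrib_left mult_left_mono)
      finally show ?thesis using gb(2)[OF that] by linarith
    qed
    then have "p (y1 + y2) - (N * norm (y2 - x2) + g x2) \<le> p y1" if "x2 \<in> X" for x2
      using that by (intro pg) auto
    then have "p (y1 + y2) - p y1 \<le> N * norm (y2 - x2) + g x2" if "x2 \<in> X" for x2
      using that by force
    then have "p (y1 + y2) - p y1 \<le> p y2" by (intro pg) auto
    then show ?thesis by linarith
  qed
  have ph: "p (c *\<^sub>R y) = c * p y" if c: "c \<ge> 0" for c y
  proof (cases "c = 0")
    case True
    have "p 0 \<le> 0" using pl[OF 0, of 0] gb(1) by simp
    moreover have "0 \<le> p 0"
    proof (rule pg)
      fix x assume "x \<in> X"
      then show "0 \<le> N * norm (0 - x) + g x" using gN by force
    qed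
    ultimately show ?thesis using True by simp
  next
    case False
    then have cp: "c > 0" using c by simp
    have 1: "c * p y \<le> p (c *\<^sub>R y)"
    proof (rule pg)
      fix x assume x: "x \<in> X"
      have "(1 / c) *\<^sub>R x \<in> X" using X x by (rule subspace_scale)
      then have "p y \<le> N * norm (y - (1 / c) *\<^sub>R x) + g ((1 / c) *\<^sub>R x)" by (rule pl)
      then have "c * p y \<le> c * (N * norm (y - (1 / c) *\<^sub>R x) + g ((1 / c) *\<^sub>R x))"
        using cp by simp
      also have "\<dots> = N * (c * norm (y - (1 / c) *\<^sub>R x)) + g x"
        using gb(3)[OF x, of "1 / c"] cp by (simp add: algebra_simps)
      also have "c * norm (y - (1 / c) *\<^sub>R x) = norm (c *\<^sub>R (y - (1 / c) *\<^sub>R x))"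
        using cp by simp
      also have "c *\<^sub>R (y - (1 / c) *\<^sub>R x) = c *\<^sub>R y - x" using cp by (simp add: algebra_simps)
      finally show "c * p y \<le> N * norm (c *\<^sub>R y - x) + g x" .
    qed
    have "p (c *\<^sub>R y) / c \<le> p y"
    proof (rule pg)
      fix x assume x: "x \<in> X"
      have "c *\<^sub>R x \<in> X" using X x by (rule subspace_scale)
      then have "p (c *\<^sub>R y) \<le> N * norm (c *\<^sub>R y - c *\<^sub>R x) + g (c *\<^sub>R x)" by (rule pl)
      also have "norm (c *\<^sub>R y - c *\<^sub>R x) = c * norm (y - x)"
        using cp by (metis scaleR_right_diff_distrib norm_scaleR abs_of_pos)
      also have "N * (c * norm (y - x)) + g (c *\<^sub>R x) = (N * norm (y - x) + g x) * c"
        using gb(3)[OF x, of c] cp by (simp add: algebra_simps)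
      finally show "p (c *\<^sub>R y) / c \<le> N * norm (y - x) + g x"
        using cp by (simp add: pos_divide_le_eq)
    qed
    then have "p (c *\<^sub>R y) \<le> c * p y" using cp by (simp add: divide_le_eq mult.commute)
    then show ?thesis using 1 by linarith
  qed
  have "sublin p" unfolding sublin_def using padd ph by blast
  then obtain f where f: "linear f" "\<forall>x. f x \<le> p x" using sublin_linear_below by blast
  have fb: "f y \<le> N * norm y" for y
  proof -
    have "f y \<le> p y" using f(2) by blast
    then show ?thesis using pl[OF 0, of y] gb(1) by simp
  qed
  have fa: "\<bar>f y\<bar> \<le> N * norm y" for y
    using fb[of y] fb[of "- y"] linear_neg[OF f(1), of y] by simp
  have fX: "f x = g x" if x: "x \<in> X" for x
  proof -
    have "f x \<le> g x" using spec[OF f(2), of x] pl[OF x, of x] by simp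
    moreover have "- x \<in> X" using X x by (rule subspace_neg)
    then have "f (- x) \<le> g (- x)" using spec[OF f(2), of "- x"] pl[of "- x" "- x"] by simp
    moreover have "g (- x) = - g x" using gb(3)[OF x, of "-1"] by simp
    ultimately show ?thesis using linear_neg[OF f(1), of x] by simp
  qed
  have "bounded_linear f"
  proof (rule bounded_linear_intro[where K=N])
    show "f (x + y) = f x + f y" for x y using f(1) by (rule linear_add)
    show "f (r *\<^sub>R x) = r *\<^sub>R f x" for r x using f(1) by (rule linear_scale)
    show "norm (f x) \<le> norm x * N" for x using fa[of x] by (simp add: mult.commute)
  qed
  then show ?thesis using fX fa by blast
qed


lemma haus_fun: "Hausdorff_space (euclidean :: ('a \<Rightarrow> real) topology)"
  unfolding euclidean_product_topology[symmetric] Hausdorff_space_product_topology by simp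

lemma closed_of_compact_fun:
  fixes K :: "('a \<Rightarrow> real) set"
  assumes "compact K" shows "closed K"
proof -
  have "compactin euclidean K" using assms by simp
  then have "closedin euclidean K" by (rule compactin_imp_closedin[OF haus_fun])
  then show ?thesis using closed_closedin by blast
qed

lemma B1_compact:
  "compact {f::'a::real_normed_vector \<Rightarrow> real. linear f \<and> (\<forall>x. \<bar>f x\<bar> \<le> norm x)}"
proof -
  define P where "P = (Pi UNIV (\<lambda>x::'a. {- norm x..norm x}))"
  have "compactin (product_topology (\<lambda>_. euclidean) UNIV) (PiE UNIV (\<lambda>x::'a. {- norm x..norm x}))"
    by (subst compactin_PiE) auto
  then have cP: "compact P" unfolding P_def euclidean_product_topology PiE_UNIV_domain by simp
  have c1: "closed {f::'a \<Rightarrow> real. \<forall>x y. f (x + y) = f x + f y}"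
  proof (intro closed_Collect_all closed_Collect_eq)
    fix x y :: 'a
    show "continuous_on UNIV (\<lambda>f::'a \<Rightarrow> real. f (x + y))" by (rule continuous_on_product_coordinates)
    show "continuous_on UNIV (\<lambda>f::'a \<Rightarrow> real. f x + f y)"
      by (intro continuous_on_add continuous_on_product_coordinates)
  qed
  have c2: "closed {f::'a \<Rightarrow> real. \<forall>c x. f (c *\<^sub>R x) = c * f x}"
  proof (intro closed_Collect_all closed_Collect_eq)
    fix c :: real and x :: 'a
    show "continuous_on UNIV (\<lambda>f::'a \<Rightarrow> real. f (c *\<^sub>R x))" by (rule continuous_on_product_coordinates)
    show "continuous_on UNIV (\<lambda>f::'a \<Rightarrow> real. c * f x)"
      by (intro continuous_on_mult continuous_on_const continuous_on_product_coordinates)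
  qed
  have eq: "{f::'a \<Rightarrow> real. linear f \<and> (\<forall>x. \<bar>f x\<bar> \<le> norm x)}
      = P \<inter> ({f. \<forall>x y. f (x + y) = f x + f y} \<inter> {f. \<forall>c x. f (c *\<^sub>R x) = c * f x})"
  proof (intro set_eqI iffI)
    fix f assume "f \<in> {f::'a \<Rightarrow> real. linear f \<and> (\<forall>x. \<bar>f x\<bar> \<le> norm x)}"
    then have f: "linear f" "\<And>x. \<bar>f x\<bar> \<le> norm x" by auto
    have "f \<in> P" unfolding P_def using f(2) by (auto simp: abs_le_iff) (metis abs_le_iff minus_le_iff)
    moreover have "f (x + y) = f x + f y" for x y using f(1) by (rule linear_add)
    moreover have "f (c *\<^sub>R x) = c * f x" for c x using linear_scale[OF f(1)] by simp
    ultimately show "f \<in> P \<inter> ({f. \<forall>x y. f (x + y) = f x + f y} \<inter> {f. \<forall>c x. f (c *\<^sub>R x) = c * f x})"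
      by blast
  next
    fix f assume f: "f \<in> P \<inter> ({f. \<forall>x y. f (x + y) = f x + f y} \<inter> {f. \<forall>c x. f (c *\<^sub>R x) = c * f x})"
    then have "linear f" by (intro linearI) auto
    moreover have "\<bar>f x\<bar> \<le> norm x" for x
    proof -
      have "f x \<in> {- norm x..norm x}" using f unfolding P_def by blast
      then show ?thesis by (simp add: abs_le_iff)
    qed
    ultimately show "f \<in> {f::'a \<Rightarrow> real. linear f \<and> (\<forall>x. \<bar>f x\<bar> \<le> norm x)}" by blast
  qed
  show ?thesis unfolding eq using cP c1 c2 by (intro compact_Int_closed closed_Int)
qed
lemma restr_cont: "continuous_on UNIV (restr X :: ('a \<Rightarrow> real) \<Rightarrow> _)"
proof (rule continuous_on_coordinatewise_then_product)
  fix i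
  show "continuous_on UNIV (\<lambda>f::'a \<Rightarrow> real. restr X f i)"
    unfolding restr_def by (cases "i \<in> X") (simp_all add: continuous_on_product_coordinates)
qed

lemma restr_sub_dual:
  assumes X: "subspace X" and f: "bounded_linear f"
  shows "restr X f \<in> sub_dual X"
proof -
  have "\<bar>f x\<bar> \<le> onorm f * norm x" for x using onorm[OF f, of x] by simp
  then show ?thesis unfolding sub_dual_def restr_def
    using X linear_add[OF bounded_linear.linear[OF f]] linear_scale[OF bounded_linear.linear[OF f]]
    by (auto simp: subspace_add subspace_scale)
qed

lemma sdn_restr_le:
  assumes X: "subspace X" and f: "bounded_linear f"
  shows "sub_dual_norm X (restr X f) \<le> onorm f"
proof (rule sdn_props(3)[OF X restr_sub_dual[OF X f]])
  show "0 \<le> onorm f" using f by (rule onorm_pos_le)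
  show "\<forall>x\<in>X. \<bar>restr X f x\<bar> \<le> onorm f * norm x"
  proof
    fix x assume "x \<in> X"
    then have "restr X f x = f x" by (simp add: restr_def)
    moreover have "norm (f x) \<le> onorm f * norm x" by (rule onorm[OF f])
    ultimately show "\<bar>restr X f x\<bar> \<le> onorm f * norm x" by (metis real_norm_def)
  qed
qed

lemma ext_exists:
  assumes X: "subspace X" and g: "g \<in> sub_dual X"
  shows "\<exists>f. bounded_linear f \<and> restr X f = g \<and> onorm f = sub_dual_norm X g"
proof -
  note sp = sdn_props[OF X g]
  obtain f where f: "bounded_linear f" "\<forall>x\<in>X. f x = g x" "\<forall>y. \<bar>f y\<bar> \<le> sub_dual_norm X g * norm y"
  proof -
    have "\<forall>x\<in>X. \<bar>g x\<bar> \<le> sub_dual_norm X g * norm x" using sp(2) by blast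
    from HB_extension[OF X g sp(1) this] show ?thesis using that by blast
  qed
  have "restr X f x = g x" for x
    using f(2) sub_dual_basic(4)[OF X g, of x] unfolding restr_def by (cases "x \<in> X") auto
  then have r: "restr X f = g" by blast
  have "onorm f \<le> sub_dual_norm X g" using f(3) sp(1) by (intro onorm_bound) auto
  moreover have "sub_dual_norm X g \<le> onorm f" using sdn_restr_le[OF X f(1)] r by simp
  ultimately show ?thesis using f(1) r by force
qed

lemma part1:
  assumes X: "subspace X"
  shows "restr X ` HB_set X = sub_dual_sphere X"
proof
  show "restr X ` HB_set X \<subseteq> sub_dual_sphere X"
    using restr_sub_dual[OF X] by (auto simp: HB_set_def sub_dual_sphere_def dual_space_def)
next
  show "sub_dual_sphere X \<subseteq> restr X ` HB_set X"
  proof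
    fix g assume "g \<in> sub_dual_sphere X"
    then have g: "g \<in> sub_dual X" "sub_dual_norm X g = 1" by (auto simp: sub_dual_sphere_def)
    obtain f where "bounded_linear f" "restr X f = g" "onorm f = sub_dual_norm X g"
      using ext_exists[OF X g(1)] by blast
    then show "g \<in> restr X ` HB_set X" using g by (auto simp: HB_set_def dual_space_def)
  qed
qed

lemma part2:
  assumes X: "subspace X"
  shows "property_U X \<longleftrightarrow> inj_on (restr X) (HB_set X)"
proof
  assume U: "property_U X"
  show "inj_on (restr X) (HB_set X)"
  proof (rule inj_onI)
    fix f1 f2 assume f: "f1 \<in> HB_set X" "f2 \<in> HB_set X" "restr X f1 = restr X f2"
    have g: "restr X f1 \<in> sub_dual X"
      using f restr_sub_dual[OF X] by (auto simp: HB_set_def dual_space_def)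
    have ex: "\<exists>!f. f \<in> dual_space \<and> restr X f = restr X f1 \<and> onorm f = sub_dual_norm X (restr X f1)"
      using U g unfolding property_U_def by blast
    have "f1 \<in> dual_space" "onorm f1 = 1" "sub_dual_norm X (restr X f1) = 1"
      "f2 \<in> dual_space" "onorm f2 = 1" "sub_dual_norm X (restr X f2) = 1"
      using f(1,2) unfolding HB_set_def by auto
    then show "f1 = f2" using ex f(3) by metis
  qed
next
  assume inj: "inj_on (restr X) (HB_set X)"
  show "property_U X" unfolding property_U_def
  proof
    fix g assume g: "g \<in> sub_dual X"
    define N where "N = sub_dual_norm X g"
    note sp = sdn_props[OF X g]
    obtain f0 where f0: "bounded_linear f0" "restr X f0 = g" "onorm f0 = N"
      using ext_exists[OF X g] N_def by blast
    have uniq: "f1 = f2" if f1: "bounded_linear f1" "restr X f1 = g" "onorm f1 = N"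
      and f2: "bounded_linear f2" "restr X f2 = g" "onorm f2 = N" for f1 f2
    proof (cases "N = 0")
      case True
      then have "\<forall>x. f1 x = 0" "\<forall>x. f2 x = 0"
        using f1 f2 onorm_eq_0[OF f1(1)] onorm_eq_0[OF f2(1)] by auto
      then show ?thesis by (simp add: fun_eq_iff)
    next
      case False
      then have Np: "N > 0" using sp(1) N_def by simp
      define h1 where "h1 = (\<lambda>x. (1 / N) *\<^sub>R f1 x)"
      define h2 where "h2 = (\<lambda>x. (1 / N) *\<^sub>R f2 x)"
      have hb: "h \<in> HB_set X \<and> restr X h = (\<lambda>x. g x / N)"
        if h: "h = (\<lambda>x. (1 / N) *\<^sub>R f x)" "bounded_linear f" "restr X f = g" "onorm f = N" for h f
      proof -
        have bl: "bounded_linear h" unfolding h(1)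
          using bounded_linear_scaleR_right h(2) by (rule bounded_linear_compose)
        have on: "onorm h = 1" unfolding h(1) using onorm_scaleR[OF h(2), of "1 / N"] h(4) Np by simp
        have "restr X h x = g x / N" for x
          using fun_cong[OF h(3), of x] unfolding h(1) restr_def by (cases "x \<in> X") auto
        then have rh: "restr X h = (\<lambda>x. g x / N)" by blast
        have s1: "sub_dual_norm X (restr X h) \<le> 1" using sdn_restr_le[OF X bl] on by simp
        define s where "s = sub_dual_norm X (restr X h)"
        have "\<forall>x\<in>X. \<bar>g x\<bar> \<le> (N * s) * norm x"
        proof
          fix x assume x: "x \<in> X"
          have "\<bar>g x / N\<bar> \<le> s * norm x"
            using sdn_props(2)[OF X restr_sub_dual[OF X bl] x] rh unfolding s_def by simp
          have "\<bar>g x\<bar> = N * \<bar>g x / N\<bar>" using Np by (simp add: abs_div)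
          also have "\<dots> \<le> N * (s * norm x)" using \<open>\<bar>g x / N\<bar> \<le> s * norm x\<close> Np by (intro mult_left_mono) auto
          finally show "\<bar>g x\<bar> \<le> (N * s) * norm x" by (simp only: mult.assoc)
        qed
        moreover have "0 \<le> N * s" using Np sdn_props(1)[OF X restr_sub_dual[OF X bl]] unfolding s_def by simp
        ultimately have "N \<le> N * s" using sp(3)[of "N * s"] unfolding N_def by blast
        then have "1 \<le> s" using Np by simp
        then show ?thesis using s1 bl on rh unfolding s_def by (auto simp: HB_set_def dual_space_def)
      qed
      have "h1 \<in> HB_set X" "h2 \<in> HB_set X" "restr X h1 = restr X h2"
        using hb[OF h1_def f1] hb[OF h2_def f2] by auto
      then have "h1 = h2" using inj by (meson inj_onD)
      then show ?thesis using Np unfolding h1_def h2_def by (auto simp: fun_eq_iff)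
    qed
    show "\<exists>!f. f \<in> dual_space \<and> restr X f = g \<and> onorm f = sub_dual_norm X g"
      using f0 uniq unfolding dual_space_def N_def by blast
  qed
qed

lemma part3:
  fixes X :: "'a::real_normed_vector set"
  assumes X: "subspace X" and inj: "inj_on (restr X) (HB_set X)"
  shows "homeomorphic_map (subtopology euclidean (HB_set X))
                               (subtopology euclidean (sub_dual_sphere X)) (restr X)"
proof (rule bijective_closed_imp_homeomorphic_map)
  show "continuous_map (top_of_set (HB_set X)) (top_of_set (sub_dual_sphere X)) (restr X)"
    using restr_cont[of X] part1[OF X] by (auto intro: continuous_on_subset)
  show "restr X ` topspace (top_of_set (HB_set X)) = topspace (top_of_set (sub_dual_sphere X))"
    using part1[OF X] by simp
  show "inj_on (restr X) (topspace (top_of_set (HB_set X)))" using inj by simp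
  define B where "B = {f::'a \<Rightarrow> real. linear f \<and> (\<forall>x. \<bar>f x\<bar> \<le> norm x)}"
  have cB: "compact B" unfolding B_def by (rule B1_compact)
  show "closed_map (top_of_set (HB_set X)) (top_of_set (sub_dual_sphere X)) (restr X)"
    unfolding closed_map_def
  proof (intro allI impI)
    fix U assume "closedin (top_of_set (HB_set X)) U"
    then obtain T where T: "closed T" "U = HB_set X \<inter> T" by (auto simp: closedin_closed)
    have cK: "compact (restr X ` (B \<inter> T))"
      using compact_Int_closed[OF cB T(1)] restr_cont[of X]
      by (intro compact_continuous_image) (auto intro: continuous_on_subset)
    have eq: "restr X ` U = sub_dual_sphere X \<inter> restr X ` (B \<inter> T)"
    proof
      show "restr X ` U \<subseteq> sub_dual_sphere X \<inter> restr X ` (B \<inter> T)"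
      proof
        fix g assume "g \<in> restr X ` U"
        then obtain f where f: "f \<in> HB_set X" "f \<in> T" "g = restr X f" using T by auto
        then have fb: "bounded_linear f" "onorm f = 1" by (auto simp: HB_set_def dual_space_def)
        have "f \<in> B" unfolding B_def using onorm[OF fb(1)] fb bounded_linear.linear by force
        then show "g \<in> sub_dual_sphere X \<inter> restr X ` (B \<inter> T)"
          using f part1[OF X] by auto
      qed
    next
      show "sub_dual_sphere X \<inter> restr X ` (B \<inter> T) \<subseteq> restr X ` U"
      proof
        fix g assume "g \<in> sub_dual_sphere X \<inter> restr X ` (B \<inter> T)"
        then obtain f where f: "f \<in> B" "f \<in> T" "g = restr X f" "g \<in> sub_dual_sphere X" by auto
        then have fl: "linear f" "\<And>x. \<bar>f x\<bar> \<le> norm x" unfolding B_def by auto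
        have bl: "bounded_linear f"
        proof (rule bounded_linear_intro[where K=1])
          show "f (x + y) = f x + f y" for x y using fl(1) by (rule linear_add)
          show "f (r *\<^sub>R x) = r *\<^sub>R f x" for r x using fl(1) by (rule linear_scale)
          show "norm (f x) \<le> norm x * 1" for x using fl(2)[of x] by simp
        qed
        have "onorm f \<le> 1" using fl(2) by (intro onorm_bound) auto
        moreover have "sub_dual_norm X (restr X f) = 1" using f by (simp add: sub_dual_sphere_def)
        moreover have "sub_dual_norm X (restr X f) \<le> onorm f" by (rule sdn_restr_le[OF X bl])
        ultimately have "f \<in> HB_set X" using bl by (auto simp: HB_set_def dual_space_def)
        then show "g \<in> restr X ` U" using f T by auto
      qed
    qed
    show "closedin (top_of_set (sub_dual_sphere X)) (restr X ` U)"
      unfolding eq using closed_of_compact_fun[OF cK] by (rule closedin_closed_Int)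
  qed
qed

theorem proposition1p5:
  fixes X :: "'a::banach set"
  assumes "subspace X" and "closed X"
  shows "restr X ` HB_set X = sub_dual_sphere X
         \<and> (property_U X \<longleftrightarrow> inj_on (restr X) (HB_set X))
         \<and> (property_U X \<longrightarrow>
              homeomorphic_map (subtopology euclidean (HB_set X))
                               (subtopology euclidean (sub_dual_sphere X)) (restr X))"
proof (intro conjI impI)
  show "restr X ` HB_set X = sub_dual_sphere X" by (rule part1[OF assms(1)])
  show "property_U X \<longleftrightarrow> inj_on (restr X) (HB_set X)" by (rule part2[OF assms(1)])
  assume "property_U X"
  then have "inj_on (restr X) (HB_set X)" using part2[OF assms(1)] by (rule iffD1[rotated])
  then show "homeomorphic_map (subtopology euclidean (HB_set X))
                               (subtopology euclidean (sub_dual_sphere X)) (restr X)"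
    by (rule part3[OF assms(1)])
qed

end
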